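(* Let $F$ be a field of characteristic zero, let $G$ be a torsion-free locally cyclic group, and let $\mathfrak{S}$ be a Schur ring over $G$. Then $\mathfrak{S}$ is either the group ring $F[G]$ or the symmetric Schur ring $F[G]^{\pm}$.
   Context: A group is locally cyclic if every finitely generated subgroup is cyclic. For finite $C\subseteq G$, $\overline{C}=\sum_{g\in C}g\in F[G]$ and $C^*=\{g^{-1}\mid g\in C\}$. A Schur ring over $G$ is an $F$-subspace $\mathfrak{S}=\operatorname{Span}_F\{\overline{C}\mid C\in\mathcal{D}(\mathfrak{S})\}$ of $F[G]$ where $\mathcal{D}(\mathfrak{S})$ is a partition of $G$ into finite sets such that (i) $\{1\}\in\mathcal{D}(\mathfrak{S})$; (ii) $C\in\mathcal{D}(\mathfrak{S})\Rightarrow C^*\in\mathcal{D}(\mathfrak{S})$; (iii) for all $C,D\in\mathcal{D}(\mathfrak{S})$, $\overline{C}\,\overline{D}=\sum_{E}\lambda_{CDE}\overline{E}$ with finitely many nonzero $\lambda_{CDE}\in F$. The group ring $F[G]$ is the Schur ring with partition into singletons; the symmetric Schur ring $F[G]^{\pm}$ is the Schur ring with partition $\{\{g,g^{-1}\}\mid g\in G\}$. *)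

theory Defs
  imports "HOL-Algebra.Elementary_Groups"
begin

definition torsion_free :: "('g, 'b) monoid_scheme \<Rightarrow> bool" where
  "torsion_free G \<longleftrightarrow>
     (\<forall>x \<in> carrier G. \<forall>n::nat. n > 0 \<longrightarrow> x [^]\<^bsub>G\<^esub> n = \<one>\<^bsub>G\<^esub> \<longrightarrow> x = \<one>\<^bsub>G\<^esub>)"

definition locally_cyclic :: "('g, 'b) monoid_scheme \<Rightarrow> bool" where
  "locally_cyclic G \<longleftrightarrow>
     (\<forall>S. S \<subseteq> carrier G \<longrightarrow> finite S \<longrightarrow> cyclic_group (subgroup_generated G S))"

(* Elements of the group ring F[G]: finitely supported functions G -> F
   (an element sum_g a_g g is represented by g |-> a_g, zero outside the carrier). *)

definition bar :: "'g set \<Rightarrow> 'g \<Rightarrow> 'f::field" where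
  "bar C = (\<lambda>x. if x \<in> C then 1 else 0)"

definition gr_mult :: "('g, 'b) monoid_scheme \<Rightarrow> ('g \<Rightarrow> 'f::field) \<Rightarrow> ('g \<Rightarrow> 'f) \<Rightarrow> 'g \<Rightarrow> 'f" where
  "gr_mult G a b = (\<lambda>x. if x \<in> carrier G then
       (\<Sum>g \<in> {g \<in> carrier G. a g \<noteq> 0}. a g * b (inv\<^bsub>G\<^esub> g \<otimes>\<^bsub>G\<^esub> x)) else 0)"

definition span_classes :: "'g set set \<Rightarrow> ('g \<Rightarrow> 'f::field) set" where
  "span_classes D = {(\<lambda>x. \<Sum>C \<in> T. c C * bar C x) | T c. finite T \<and> T \<subseteq> D}"

definition schur_partition :: "('g, 'b) monoid_scheme \<Rightarrow> 'g set set \<Rightarrow> ('f::field) itself \<Rightarrow> bool" where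
  "schur_partition G D (TYPE('f)) \<longleftrightarrow>
     (\<forall>C \<in> D. C \<noteq> {} \<and> finite C \<and> C \<subseteq> carrier G) \<and>
     (\<forall>C \<in> D. \<forall>C' \<in> D. C \<noteq> C' \<longrightarrow> C \<inter> C' = {}) \<and>
     \<Union>D = carrier G \<and>
     {\<one>\<^bsub>G\<^esub>} \<in> D \<and>
     (\<forall>C \<in> D. (\<lambda>g. inv\<^bsub>G\<^esub> g) ` C \<in> D) \<and>
     (\<forall>C \<in> D. \<forall>C' \<in> D. \<exists>lam::'g set \<Rightarrow> 'f.
        finite {E \<in> D. lam E \<noteq> 0} \<and>
        gr_mult G (bar C) (bar C') = (\<lambda>x. \<Sum>E \<in> {E \<in> D. lam E \<noteq> 0}. lam E * bar E x))"

definition schur_ring :: "('g, 'b) monoid_scheme \<Rightarrow> ('g \<Rightarrow> 'f::field) set \<Rightarrow> bool" where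
  "schur_ring G S \<longleftrightarrow> (\<exists>D. schur_partition G D TYPE('f) \<and> S = span_classes D)"

definition group_ring :: "('g, 'b) monoid_scheme \<Rightarrow> ('g \<Rightarrow> 'f::field) set" where
  "group_ring G = span_classes {{g} | g. g \<in> carrier G}"

definition sym_schur_ring :: "('g, 'b) monoid_scheme \<Rightarrow> ('g \<Rightarrow> 'f::field) set" where
  "sym_schur_ring G = span_classes {{g, inv\<^bsub>G\<^esub> g} | g. g \<in> carrier G}"

end

theory Submission
  imports Defs
begin


definition cnt :: "nat \<Rightarrow> int set \<Rightarrow> int \<Rightarrow> nat" where
  "cnt n K s = card {xs. length xs = n \<and> set xs \<subseteq> K \<and> sum_list xs = s}"

lemma cnt_set_finite: "finite K \<Longrightarrow> finite {xs. length xs = n \<and> set xs \<subseteq> K \<and> sum_list xs = s}"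
  by (rule finite_subset[OF _ finite_lists_length_eq[of K n]]) auto

lemma cnt_0: "cnt 0 K s = (if s = 0 then 1 else 0)"
proof -
  have "{xs::int list. length xs = 0 \<and> set xs \<subseteq> K \<and> sum_list xs = s} = (if s = 0 then {[]} else {})"
    by auto
  then show ?thesis unfolding cnt_def by simp
qed

lemma cnt_Suc:
  assumes "finite K"
  shows "cnt (Suc n) K s = (\<Sum>k\<in>K. cnt n K (s - k))"
proof -
  let ?A = "\<lambda>k. {xs. length xs = n \<and> set xs \<subseteq> K \<and> sum_list xs = s - k}"
  have eq: "{xs. length xs = Suc n \<and> set xs \<subseteq> K \<and> sum_list xs = s} = (\<Union>k\<in>K. (Cons k) ` ?A k)"
  proof (intro Set.set_eqI iffI)
    fix xs assume "xs \<in> {xs. length xs = Suc n \<and> set xs \<subseteq> K \<and> sum_list xs = s}"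
    then show "xs \<in> (\<Union>k\<in>K. (Cons k) ` ?A k)"
    proof (cases xs)
      case (Cons a ys)
      then show ?thesis using \<open>xs \<in> _\<close> by (auto intro!: bexI[of _ a] image_eqI[of _ _ ys])
    qed auto
  qed auto
  have "card (\<Union>k\<in>K. (Cons k) ` ?A k) = (\<Sum>k\<in>K. card ((Cons k) ` ?A k))"
    by (rule card_UN_disjoint) (use assms cnt_set_finite in auto)
  also have "\<dots> = (\<Sum>k\<in>K. card (?A k))"
    by (rule sum.cong) (auto intro: card_image)
  finally show ?thesis unfolding cnt_def eq .
qed

lemma sum_list_le_max:
  assumes "\<forall>x\<in>set xs. x \<le> (k::int)"
  shows "sum_list xs \<le> int (length xs) * k \<and> (sum_list xs = int (length xs) * k \<longrightarrow> (\<forall>x\<in>set xs. x = k))"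
  using assms
proof (induction xs)
  case (Cons a xs)
  then show ?case by (auto simp: algebra_simps)
qed auto

lemma cnt_top:
  assumes "k \<in> K" "\<forall>x\<in>K. x \<le> k"
  shows "cnt n K (int n * k) = 1"
proof -
  have "{xs. length xs = n \<and> set xs \<subseteq> K \<and> sum_list xs = int n * k} = {replicate n k}"
  proof (intro Set.set_eqI iffI)
    fix xs assume A: "xs \<in> {xs. length xs = n \<and> set xs \<subseteq> K \<and> sum_list xs = int n * k}"
    then have "\<forall>x\<in>set xs. x = k" using sum_list_le_max[of xs k] assms by auto
    then show "xs \<in> {replicate n k}" using A by (auto intro: replicate_eqI)
  qed (use assms in \<open>auto simp: sum_list_replicate\<close>)
  then show ?thesis unfolding cnt_def by simp
qed

lemma cnt_bot:
  assumes "k \<in> K" "\<forall>x\<in>K. k \<le> x"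
  shows "cnt n K (int n * k) = 1"
proof -
  have neg: "sum_list (map uminus xs) = - sum_list (xs::int list)" for xs
    by (induction xs) auto
  have "{xs. length xs = n \<and> set xs \<subseteq> K \<and> sum_list xs = int n * k} = {replicate n k}"
  proof (intro Set.set_eqI iffI)
    fix xs assume A: "xs \<in> {xs. length xs = n \<and> set xs \<subseteq> K \<and> sum_list xs = int n * k}"
    have "\<forall>x\<in>set (map uminus xs). x \<le> -k" using A assms by auto
    then have "\<forall>x\<in>set (map uminus xs). x = -k" using sum_list_le_max[of "map uminus xs" "-k"] A neg[of xs]
      by auto
    then have "\<forall>x\<in>set xs. x = k" by auto
    then show "xs \<in> {replicate n k}" using A by (auto intro: replicate_eqI)
  qed (use assms in \<open>auto simp: sum_list_replicate\<close>)
  then show ?thesis unfolding cnt_def by simp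
qed

lemma sum_list_upd: "i < length xs \<Longrightarrow> sum_list (xs[i := x]) = sum_list xs - xs ! i + (x::int)"
  by (induction xs arbitrary: i) (auto split: nat.splits)

lemma cnt_one_const:
  assumes "finite K" "cnt n K s = 1" "n \<ge> 1"
  shows "\<exists>k\<in>K. s = int n * k"
proof -
  let ?X = "{xs. length xs = n \<and> set xs \<subseteq> K \<and> sum_list xs = s}"
  obtain xs where X: "?X = {xs}" using assms(2) unfolding cnt_def by (auto simp: card_Suc_eq)
  then have xs: "length xs = n" "set xs \<subseteq> K" "sum_list xs = s" by auto
  have all: "xs ! i = xs ! 0" if "i < n" for i
  proof (rule ccontr)
    assume ne: "xs ! i \<noteq> xs ! 0"
    let ?ys = "xs[0 := xs ! i, i := xs ! 0]"
    have "sum_list ?ys = sum_list xs" using that xs(1) assms(3)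
      by (cases "i = 0") (auto simp: sum_list_upd nth_list_update)
    moreover have "set ?ys \<subseteq> K"
    proof -
      have l: "0 < length xs" "i < length xs" using xs(1) that by auto
      have "xs ! 0 \<in> set xs" "xs ! i \<in> set xs" using nth_mem[OF l(1)] nth_mem[OF l(2)] by auto
      then show ?thesis using xs(2) by (intro set_update_subsetI) blast+
    qed
    ultimately have "?ys \<in> ?X" using xs by auto
    then have "?ys = xs" using X by auto
    moreover have "?ys ! 0 = xs ! i" using ne that xs(1) by (cases "i = 0") auto
    ultimately show False using ne by auto
  qed
  have "xs = replicate n (xs ! 0)"
    by (rule replicate_eqI) (use xs(1) all in \<open>auto simp: in_set_conv_nth\<close>)
  then have "s = int n * xs ! 0" using xs(3) by (metis sum_list_replicate of_nat_id int_ops(7))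
  moreover have "xs ! 0 \<in> K"
  proof -
    have "0 < length xs" using xs(1) assms(3) by auto
    then have "xs ! 0 \<in> set xs" by (rule nth_mem)
    then show ?thesis using xs(2) by blast
  qed
  ultimately show ?thesis by blast
qed

lemma cnt_interior:
  assumes "finite K" "k \<in> K" "m \<in> K" "M \<in> K" "m < k" "k < M" "int n \<ge> M - m"
  shows "cnt n K (int n * k) \<noteq> 1"
proof
  assume c1: "cnt n K (int n * k) = 1"
  let ?X = "{xs. length xs = n \<and> set xs \<subseteq> K \<and> sum_list xs = int n * k}"
  let ?ys = "replicate (nat (M - k)) m @ replicate (nat (k - m)) M @ replicate (n - nat (M - m)) k"
  have "replicate n k \<in> ?X" using assms by (auto simp: sum_list_replicate)
  moreover have "?ys \<in> ?X"
  proof -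
    have "length ?ys = n" using assms by auto
    moreover have "set ?ys \<subseteq> K" using assms by auto
    moreover have "sum_list ?ys = int n * k"
    proof -
      have "sum_list ?ys = (M - k) * m + (k - m) * M + int (n - nat (M - m)) * k"
        using assms by (simp add: sum_list_replicate)
      also have "int (n - nat (M - m)) = int n - (M - m)" using assms by auto
      finally show ?thesis by (simp add: algebra_simps)
    qed
    ultimately show ?thesis by blast
  qed
  moreover have "?ys \<noteq> replicate n k"
  proof -
    have "m \<in> set ?ys" using assms by auto
    then show ?thesis using assms by (metis in_set_replicate less_irrefl)
  qed
  moreover have "finite ?X" using cnt_set_finite[OF assms(1)] .
  ultimately have "card ?X \<ge> card {replicate n k, ?ys}"
    by (intro card_mono) auto
  moreover have "card {replicate n k, ?ys} = 2" using \<open>?ys \<noteq> replicate n k\<close> by auto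
  ultimately have "card ?X \<ge> 2" by simp
  then show False using c1 unfolding cnt_def by simp
qed


lemma cnt_supp_finite:
  assumes "finite K"
  shows "finite {s. cnt n K s \<noteq> 0}"
proof -
  have "{s. cnt n K s \<noteq> 0} \<subseteq> sum_list ` {xs. set xs \<subseteq> K \<and> length xs = n}"
  proof
    fix s assume "s \<in> {s. cnt n K s \<noteq> 0}"
    then have "card {xs. length xs = n \<and> set xs \<subseteq> K \<and> sum_list xs = s} \<noteq> 0"
      unfolding cnt_def by simp
    then have "{xs. length xs = n \<and> set xs \<subseteq> K \<and> sum_list xs = s} \<noteq> {}"
      by (intro notI) simp
    then show "s \<in> sum_list ` {xs. set xs \<subseteq> K \<and> length xs = n}" by blast
  qed
  then show ?thesis by (rule finite_surj[OF finite_lists_length_eq[OF assms]])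
qed


lemma cnt2:
  assumes "m \<noteq> M"
  shows "cnt 2 {m, M} s = (if s = m + m then 1 else 0) + (if s = m + M then 1 else 0)
      + ((if s = M + m then 1 else 0) + (if s = M + M then 1 else 0))"
proof -
  have "cnt 2 {m, M} s = cnt (Suc (Suc 0)) {m, M} s" by (simp add: numeral_2_eq_2)
  also have "\<dots> = (\<Sum>k\<in>{m, M}. \<Sum>k'\<in>{m, M}. cnt 0 {m, M} (s - k - k'))"
    by (simp add: cnt_Suc)
  also have "\<dots> = (if s = m + m then 1 else 0) + (if s = m + M then 1 else 0)
      + ((if s = M + m then 1 else 0) + (if s = M + M then 1 else 0))"
    using assms by (simp add: cnt_0 algebra_simps)
  finally show ?thesis .
qed

lemma cnt2_mid: "m \<noteq> M \<Longrightarrow> cnt 2 {m, M} (m + M) = 2"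
  by (simp add: cnt2)

lemma cnt2_only: "m \<noteq> M \<Longrightarrow> cnt 2 {m, M} t = 2 \<Longrightarrow> t = m + M"
  by (simp add: cnt2 split: if_splits)



lemma sum_ind_card:
  assumes "finite A"
  shows "(\<Sum>g\<in>A. if P g then (1::'f::field) else 0) = of_nat (card {g\<in>A. P g})"
proof -
  have "(\<Sum>g\<in>A. if P g then (1::'f) else 0) = (\<Sum>g\<in>{g\<in>A. P g}. 1)"
    using sum.inter_filter[OF assms, of "\<lambda>_. (1::'f)" P] by simp
  then show ?thesis by simp
qed

lemma gr_mult_bar:
  assumes "A \<subseteq> carrier G"
  shows "gr_mult G (bar A :: 'g \<Rightarrow> 'f::field) b x =
    (if x \<in> carrier G then (\<Sum>g\<in>A. b (inv\<^bsub>G\<^esub> g \<otimes>\<^bsub>G\<^esub> x)) else 0)"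
proof -
  have "{g \<in> carrier G. (bar A g :: 'f) \<noteq> 0} = A" using assms by (auto simp: bar_def)
  moreover have "(\<Sum>g\<in>A. (bar A g :: 'f) * b (inv\<^bsub>G\<^esub> g \<otimes>\<^bsub>G\<^esub> x)) = (\<Sum>g\<in>A. b (inv\<^bsub>G\<^esub> g \<otimes>\<^bsub>G\<^esub> x))"
    by (rule sum.cong) (auto simp: bar_def)
  ultimately show ?thesis unfolding gr_mult_def by simp
qed

lemma gr_mult_bar_bar:
  assumes "A \<subseteq> carrier G" "finite A" "x \<in> carrier G"
  shows "gr_mult G (bar A :: 'g \<Rightarrow> 'f::field) (bar B) x = of_nat (card {g\<in>A. inv\<^bsub>G\<^esub> g \<otimes>\<^bsub>G\<^esub> x \<in> B})"
proof -
  have "gr_mult G (bar A :: 'g \<Rightarrow> 'f::field) (bar B) x = (\<Sum>g\<in>A. bar B (inv\<^bsub>G\<^esub> g \<otimes>\<^bsub>G\<^esub> x))"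
    using assms by (subst gr_mult_bar) auto
  also have "\<dots> = of_nat (card {g\<in>A. inv\<^bsub>G\<^esub> g \<otimes>\<^bsub>G\<^esub> x \<in> B})"
    unfolding bar_def by (rule sum_ind_card[OF assms(2)])
  finally show ?thesis .
qed

lemma sp_D:
  assumes "schur_partition G D TYPE('f::field)"
  shows "\<And>C. C \<in> D \<Longrightarrow> C \<noteq> {} \<and> finite C \<and> C \<subseteq> carrier G"
    and "\<And>C C' x. C \<in> D \<Longrightarrow> C' \<in> D \<Longrightarrow> x \<in> C \<Longrightarrow> x \<in> C' \<Longrightarrow> C = C'"
    and "\<And>x. x \<in> carrier G \<Longrightarrow> \<exists>C\<in>D. x \<in> C"
    and "{\<one>\<^bsub>G\<^esub>} \<in> D"
    and "\<And>C. C \<in> D \<Longrightarrow> (\<lambda>g. inv\<^bsub>G\<^esub> g) ` C \<in> D"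
    and "\<And>C C'. C \<in> D \<Longrightarrow> C' \<in> D \<Longrightarrow> \<exists>lam::'g set \<Rightarrow> 'f.
        finite {E \<in> D. lam E \<noteq> 0} \<and>
        gr_mult G (bar C) (bar C') = (\<lambda>x. \<Sum>E \<in> {E \<in> D. lam E \<noteq> 0}. lam E * bar E x)"
proof -
  note d = assms[unfolded schur_partition_def]
  note d1 = d[THEN conjunct1] and d2 = d[THEN conjunct2, THEN conjunct1]
    and d3 = d[THEN conjunct2, THEN conjunct2, THEN conjunct1]
    and d4 = d[THEN conjunct2, THEN conjunct2, THEN conjunct2, THEN conjunct1]
    and d5 = d[THEN conjunct2, THEN conjunct2, THEN conjunct2, THEN conjunct2, THEN conjunct1]
    and d6 = d[THEN conjunct2, THEN conjunct2, THEN conjunct2, THEN conjunct2, THEN conjunct2]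
  show "\<And>C. C \<in> D \<Longrightarrow> C \<noteq> {} \<and> finite C \<and> C \<subseteq> carrier G" using d1 by blast
  show "\<And>C C' x. C \<in> D \<Longrightarrow> C' \<in> D \<Longrightarrow> x \<in> C \<Longrightarrow> x \<in> C' \<Longrightarrow> C = C'" using d2 by blast
  show "\<And>x. x \<in> carrier G \<Longrightarrow> \<exists>C\<in>D. x \<in> C" using d3 by blast
  show "{\<one>\<^bsub>G\<^esub>} \<in> D" using d4 by blast
  show "\<And>C. C \<in> D \<Longrightarrow> (\<lambda>g. inv\<^bsub>G\<^esub> g) ` C \<in> D" using d5 by blast
  show "\<And>C C'. C \<in> D \<Longrightarrow> C' \<in> D \<Longrightarrow> \<exists>lam::'g set \<Rightarrow> 'f.
        finite {E \<in> D. lam E \<noteq> 0} \<and>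
        gr_mult G (bar C) (bar C') = (\<lambda>x. \<Sum>E \<in> {E \<in> D. lam E \<noteq> 0}. lam E * bar E x)" using d6 by blast
qed


definition classconst :: "'g set set \<Rightarrow> ('g \<Rightarrow> 'f) \<Rightarrow> bool" where
  "classconst D f \<longleftrightarrow> (\<forall>E\<in>D. \<forall>x\<in>E. \<forall>y\<in>E. f x = f y)"

lemma same_class:
  assumes "schur_partition G D TYPE('f::field)" "E0 \<in> D" "x \<in> E0" "y \<in> E0" "E \<in> D"
  shows "(x \<in> E) = (y \<in> E)"
proof
  assume "x \<in> E"
  then have "E = E0" using sp_D(2)[OF assms(1) assms(5) assms(2)] assms(3) by simp
  then show "y \<in> E" using assms(4) by simp
next
  assume "y \<in> E"
  then have "E = E0" using sp_D(2)[OF assms(1) assms(5) assms(2)] assms(4) by simp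
  then show "x \<in> E" using assms(3) by simp
qed

lemma cc_bar:
  assumes "schur_partition G D TYPE('f::field)" "E \<in> D"
  shows "classconst D (bar E :: 'g \<Rightarrow> 'f)"
  unfolding classconst_def bar_def
proof (intro ballI)
  fix E0 x y assume "E0 \<in> D" "x \<in> E0" "y \<in> E0"
  then have "(x \<in> E) = (y \<in> E)" using same_class[OF assms(1) _ _ _ assms(2)] by blast
  then show "(if x \<in> E then 1 else 0) = (if y \<in> E then (1::'f) else 0)" by simp
qed

lemma cc_prod:
  assumes sp: "schur_partition G D TYPE('f::field)" "C \<in> D" "C' \<in> D"
  shows "classconst D (gr_mult G (bar C) (bar C') :: 'g \<Rightarrow> 'f)"
proof -
  obtain lam :: "'g set \<Rightarrow> 'f" where L: "gr_mult G (bar C) (bar C') = (\<lambda>x. \<Sum>E \<in> {E \<in> D. lam E \<noteq> 0}. lam E * bar E x)"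
    using sp_D(6)[OF sp] by blast
  show ?thesis unfolding classconst_def L
  proof (intro ballI)
    fix E0 x y assume "E0 \<in> D" "x \<in> E0" "y \<in> E0"
    then show "(\<Sum>E \<in> {E \<in> D. lam E \<noteq> 0}. lam E * bar E x) = (\<Sum>E \<in> {E \<in> D. lam E \<noteq> 0}. lam E * bar E y)"
    proof (intro sum.cong refl)
      fix E assume "E \<in> {E \<in> D. lam E \<noteq> 0}"
      then have "(x \<in> E) = (y \<in> E)" using same_class[OF sp(1) \<open>E0 \<in> D\<close> \<open>x \<in> E0\<close> \<open>y \<in> E0\<close>] by blast
      then show "lam E * bar E x = lam E * bar E y" by (simp add: bar_def)
    qed
  qed
qed


lemma span_of_cc:
  assumes sp: "schur_partition G D TYPE('f::field)"
    and cc: "classconst D (f :: 'g \<Rightarrow> 'f)"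
    and z: "\<And>x. x \<notin> carrier G \<Longrightarrow> f x = 0"
    and fin: "finite {x. f x \<noteq> 0}"
  shows "\<exists>T a. finite T \<and> T \<subseteq> D \<and> (\<forall>x. f x = (\<Sum>E\<in>T. a E * bar E x))"
proof -
  define T where "T = {E\<in>D. \<exists>x\<in>E. f x \<noteq> 0}"
  define a where "a E = f (SOME x. x \<in> E)" for E
  have "T \<subseteq> (\<lambda>x. THE E. E \<in> D \<and> x \<in> E) ` {x. f x \<noteq> 0}"
  proof
    fix E assume "E \<in> T"
    then obtain x where x: "E \<in> D" "x \<in> E" "f x \<noteq> 0" unfolding T_def by auto
    then have "(THE E. E \<in> D \<and> x \<in> E) = E"
      by (intro the_equality) (use sp_D(2)[OF sp] in auto)
    then show "E \<in> (\<lambda>x. THE E. E \<in> D \<and> x \<in> E) ` {x. f x \<noteq> 0}" using x by force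
  qed
  then have finT: "finite T" by (rule finite_surj[OF fin])
  have "f x = (\<Sum>E\<in>T. a E * bar E x)" for x
  proof (cases "x \<in> carrier G")
    case False
    have "\<forall>E\<in>T. x \<notin> E"
    proof
      fix E assume "E \<in> T"
      then have "E \<subseteq> carrier G" using sp_D(1)[OF sp] unfolding T_def by simp
      then show "x \<notin> E" using False by auto
    qed
    then show ?thesis using False z by (simp add: bar_def)
  next
    case True
    then obtain E0 where E0: "E0 \<in> D" "x \<in> E0" using sp_D(3)[OF sp] by blast
    have other: "\<forall>E\<in>T - {E0}. bar E x = (0::'f)"
    proof
      fix E assume E: "E \<in> T - {E0}"
      then have "E \<in> D" "E \<noteq> E0" unfolding T_def by auto
      then have "x \<notin> E" using sp_D(2)[OF sp \<open>E \<in> D\<close> E0(1) _ E0(2)] by auto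
      then show "bar E x = (0::'f)" by (simp add: bar_def)
    qed
    show ?thesis
    proof (cases "E0 \<in> T")
      case True
      have "(\<Sum>E\<in>T. a E * bar E x) = a E0 * bar E0 x + (\<Sum>E\<in>T - {E0}. a E * bar E x)"
        using True finT by (simp add: sum.remove)
      also have "(\<Sum>E\<in>T - {E0}. a E * bar E x) = 0" using other by simp
      also have "a E0 = f x"
      proof -
        have "(SOME x. x \<in> E0) \<in> E0" using E0 by (meson someI)
        moreover have "\<forall>x\<in>E0. \<forall>y\<in>E0. f x = f y" using cc E0(1) unfolding classconst_def by blast
        ultimately show ?thesis unfolding a_def using E0(2) by blast
      qed
      finally show ?thesis using E0 by (simp add: bar_def)
    next
      case False
      then have "f x = 0" using E0 unfolding T_def by auto
      moreover have "\<forall>E\<in>T. bar E x = (0::'f)" using other False by auto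
      ultimately show ?thesis by simp
    qed
  qed
  then have all: "\<forall>x. f x = (\<Sum>E\<in>T. a E * bar E x)" by blast
  have TD: "T \<subseteq> D" unfolding T_def by auto
  show ?thesis
    apply (rule exI[of _ T], rule exI[of _ a])
    using finT TD all by simp
qed


lemma cc_mult:
  assumes sp: "schur_partition G D TYPE('f::field)" and C: "C \<in> D"
    and cc: "classconst D (f :: 'g \<Rightarrow> 'f)"
    and z: "\<And>x. x \<notin> carrier G \<Longrightarrow> f x = 0"
    and fin: "finite {x. f x \<noteq> 0}"
  shows "classconst D (gr_mult G (bar C) f)"
proof -
  obtain T a where T: "finite T" "T \<subseteq> D" "\<forall>x. f x = (\<Sum>E\<in>T. a E * bar E x)"
    using span_of_cc[OF sp cc z fin] by blast
  have Csub: "C \<subseteq> carrier G" using sp_D(1)[OF sp C] by blast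
  have eq: "gr_mult G (bar C) f x = (\<Sum>E\<in>T. a E * gr_mult G (bar C) (bar E) x)" for x
  proof (cases "x \<in> carrier G")
    case True
    have "gr_mult G (bar C) f x = (\<Sum>g\<in>C. \<Sum>E\<in>T. a E * bar E (inv\<^bsub>G\<^esub> g \<otimes>\<^bsub>G\<^esub> x))"
      using True T(3) by (simp add: gr_mult_bar[OF Csub])
    also have "\<dots> = (\<Sum>E\<in>T. a E * (\<Sum>g\<in>C. bar E (inv\<^bsub>G\<^esub> g \<otimes>\<^bsub>G\<^esub> x)))"
      by (simp add: sum.swap[of _ C] sum_distrib_left)
    also have "\<dots> = (\<Sum>E\<in>T. a E * gr_mult G (bar C) (bar E) x)"
      using True by (simp add: gr_mult_bar[OF Csub])
    finally show ?thesis .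
  next
    case False
    then show ?thesis by (simp add: gr_mult_def)
  qed
  show ?thesis unfolding classconst_def eq
  proof (intro ballI sum.cong refl)
    fix E0 x y E assume "E0 \<in> D" "x \<in> E0" "y \<in> E0" "E \<in> T"
    then have "E \<in> D" using T(2) by blast
    have "\<forall>E0\<in>D. \<forall>x\<in>E0. \<forall>y\<in>E0. gr_mult G (bar C) (bar E) x = (gr_mult G (bar C) (bar E) y :: 'f)"
      using cc_prod[OF sp C \<open>E \<in> D\<close>] unfolding classconst_def by blast
    then have "gr_mult G (bar C) (bar E) x = (gr_mult G (bar C) (bar E) y :: 'f)"
      using \<open>E0 \<in> D\<close> \<open>x \<in> E0\<close> \<open>y \<in> E0\<close> by blast
    then show "a E * gr_mult G (bar C) (bar E) x = a E * gr_mult G (bar C) (bar E) y" by simp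
  qed
qed


context group begin

lemma getcyc:
  assumes "locally_cyclic G" "finite S" "S \<subseteq> carrier G"
  shows "\<exists>c\<in>carrier G. S \<subseteq> range (\<lambda>n::int. c [^] n)"
proof -
  let ?H = "subgroup_generated G S"
  have "cyclic_group ?H" using assms unfolding locally_cyclic_def by blast
  then obtain x where x: "x \<in> carrier ?H" "carrier ?H = range (\<lambda>n::int. x [^]\<^bsub>?H\<^esub> n)"
    using group.cyclic_group[OF group_subgroup_generated] by blast
  have "carrier ?H \<subseteq> carrier G" by (rule carrier_subgroup_generated_subset)
  moreover have "S \<subseteq> carrier ?H" using assms(3)
    by (auto simp: carrier_subgroup_generated intro: generate.incl)
  ultimately show ?thesis using x int_pow_subgroup_generated[OF x(1)]
    by (intro bexI[of _ x]) auto
qed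

lemma pow_inj:
  assumes "torsion_free G" "c \<in> carrier G" "c \<noteq> \<one>" "c [^] (k::int) = c [^] (l::int)"
  shows "k = l"
proof (rule ccontr)
  assume ne: "k \<noteq> l"
  have e: "c [^] (k - l) = \<one>" using assms by (simp add: int_pow_diff)
  show False
  proof (cases "k - l > 0")
    case True
    then have "c [^] nat (k - l) = \<one>" using e by (metis int_pow_int nat_0_le order_less_imp_le)
    moreover have "nat (k - l) > 0" using True by auto
    ultimately show ?thesis using assms unfolding torsion_free_def by blast
  next
    case False
    then have "c [^] (l - k) = \<one>" using e assms
      by (metis inv_one int_pow_neg minus_diff_eq)
    moreover have "l - k > 0" using False ne by auto
    ultimately have "c [^] nat (l - k) = \<one>" by (metis int_pow_int nat_0_le order_less_imp_le)
    moreover have "nat (l - k) > 0" using \<open>l - k > 0\<close> by auto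
    ultimately show ?thesis using assms unfolding torsion_free_def by blast
  qed
qed

end


fun pw :: "('g, 'b) monoid_scheme \<Rightarrow> 'g set \<Rightarrow> nat \<Rightarrow> 'g \<Rightarrow> 'f::field" where
  "pw G C 0 = bar {\<one>\<^bsub>G\<^esub>}"
| "pw G C (Suc n) = gr_mult G (bar C) (pw G C n)"

context group begin

lemma pow_inj_on:
  assumes "torsion_free G" "c \<in> carrier G" "c \<noteq> \<one>"
  shows "inj (\<lambda>k::int. c [^] k)"
  using pow_inj[OF assms] by (auto intro: injI)

lemma pw_formula:
  assumes tf: "torsion_free G" and c: "c \<in> carrier G" "c \<noteq> \<one>"
    and C: "C \<subseteq> range (\<lambda>k::int. c [^] k)" "finite C"
  shows "(\<forall>s. (pw G C n (c [^] (s::int)) :: 'f::field) = of_nat (cnt n {k::int. c [^] k \<in> C} s)) \<and>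
         (\<forall>x. x \<notin> range (\<lambda>k::int. c [^] k) \<longrightarrow> (pw G C n x :: 'f) = 0)"
proof (induction n)
  case 0
  have "(bar {\<one>} (c [^] s) :: 'f) = of_nat (cnt 0 {k::int. c [^] k \<in> C} s)" for s :: int
  proof -
    have "(c [^] s = \<one>) = (s = 0)"
      using pow_inj[OF tf c, of s 0] by auto
    then show ?thesis by (simp add: bar_def cnt_0)
  qed
  moreover have "(bar {\<one>} x :: 'f) = 0" if "x \<notin> range (\<lambda>k::int. c [^] k)" for x
  proof -
    have "x \<noteq> \<one>" using that by (metis int_pow_0 rangeI)
    then show ?thesis by (simp add: bar_def)
  qed
  ultimately show ?case by simp
next
  case (Suc n)
  let ?K = "{k::int. c [^] k \<in> C}"
  have injc: "inj (\<lambda>k::int. c [^] k)" by (rule pow_inj_on[OF tf c])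
  have finK: "finite ?K"
    using finite_vimageI[OF C(2) injc] by (simp add: vimage_def)
  have CK: "C = (\<lambda>k. c [^] k) ` ?K" using C(1) by auto
  have Csub: "C \<subseteq> carrier G" using C(1) c by auto
  have A: "(pw G C (Suc n) (c [^] s) :: 'f) = of_nat (cnt (Suc n) ?K s)" for s :: int
  proof -
    have "(pw G C (Suc n) (c [^] s) :: 'f) = (\<Sum>g\<in>C. pw G C n (inv g \<otimes> c [^] s))"
      using c by (simp add: gr_mult_bar[OF Csub])
    also have "\<dots> = (\<Sum>k\<in>?K. pw G C n (inv (c [^] k) \<otimes> c [^] s))"
      by (subst CK, subst sum.reindex) (use injc in \<open>auto intro: inj_on_subset\<close>)
    also have "\<dots> = (\<Sum>k\<in>?K. pw G C n (c [^] (s - k)))"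
    proof (rule sum.cong[OF refl])
      fix k
      have "c [^] (- k + s) = c [^] (- k) \<otimes> c [^] s" by (rule int_pow_mult[OF c(1)])
      then have "inv (c [^] k) \<otimes> c [^] s = c [^] (- k + s)"
        using int_pow_neg[OF c(1), of k] by simp
      then show "(pw G C n (inv (c [^] k) \<otimes> c [^] s) :: 'f) = pw G C n (c [^] (s - k))" by simp
    qed
    also have "\<dots> = (\<Sum>k\<in>?K. of_nat (cnt n ?K (s - k)))"
      using Suc.IH by simp
    also have "\<dots> = of_nat (cnt (Suc n) ?K s)"
      by (simp add: cnt_Suc[OF finK])
    finally show ?thesis .
  qed
  have B: "(pw G C (Suc n) x :: 'f) = 0" if x: "x \<notin> range (\<lambda>k::int. c [^] k)" for x
  proof (cases "x \<in> carrier G")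
    case False
    then show ?thesis by (simp add: gr_mult_def)
  next
    case True
    have "(pw G C (Suc n) x :: 'f) = (\<Sum>g\<in>C. pw G C n (inv g \<otimes> x))"
      using True by (simp add: gr_mult_bar[OF Csub])
    also have "\<dots> = 0"
    proof (rule sum.neutral, rule ballI)
      fix g assume "g \<in> C"
      then obtain k :: int where k: "g = c [^] k" using C(1) by auto
      have "inv g \<otimes> x \<notin> range (\<lambda>k::int. c [^] k)"
      proof
        assume "inv g \<otimes> x \<in> range (\<lambda>k::int. c [^] k)"
        then obtain t :: int where t: "inv g \<otimes> x = c [^] t" by auto
        have "x = g \<otimes> (inv g \<otimes> x)" using True k c by (simp add: m_assoc[symmetric])
        also have "\<dots> = c [^] (k + t)" using t k c by (simp add: int_pow_mult)
        finally show False using x by auto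
      qed
      then show "(pw G C n (inv g \<otimes> x) :: 'f) = 0" using Suc.IH by blast
    qed
    finally show ?thesis .
  qed
  show ?case using A B by blast
qed

end


lemma prod_support:
  assumes sp: "schur_partition G D TYPE('f::field_char_0)"
    and A: "A \<in> D" and B: "B \<in> D" and C0: "C0 \<in> D" "z \<in> C0" "y \<in> C0"
    and a0: "a0 \<in> A" "inv\<^bsub>G\<^esub> a0 \<otimes>\<^bsub>G\<^esub> z \<in> B"
  shows "\<exists>a\<in>A. inv\<^bsub>G\<^esub> a \<otimes>\<^bsub>G\<^esub> y \<in> B"
proof -
  have Af: "finite A" "A \<subseteq> carrier G" using sp_D(1)[OF sp A] by auto
  have zy: "z \<in> carrier G" "y \<in> carrier G" using sp_D(1)[OF sp C0(1)] C0 by auto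
  have "\<forall>E0\<in>D. \<forall>x\<in>E0. \<forall>y\<in>E0. gr_mult G (bar A) (bar B) x = (gr_mult G (bar A) (bar B) y :: 'f)"
    using cc_prod[OF sp A B] unfolding classconst_def by blast
  then have eq: "gr_mult G (bar A) (bar B) z = (gr_mult G (bar A) (bar B) y :: 'f)" using C0 by blast
  have "a0 \<in> {g\<in>A. inv\<^bsub>G\<^esub> g \<otimes>\<^bsub>G\<^esub> z \<in> B}" using a0 by simp
  moreover have "finite {g\<in>A. inv\<^bsub>G\<^esub> g \<otimes>\<^bsub>G\<^esub> z \<in> B}" using Af(1) by simp
  ultimately have "card {g\<in>A. inv\<^bsub>G\<^esub> g \<otimes>\<^bsub>G\<^esub> z \<in> B} \<noteq> 0"
    by (metis card_0_eq empty_iff)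
  moreover have "gr_mult G (bar A) (bar B) z = (of_nat (card {g\<in>A. inv\<^bsub>G\<^esub> g \<otimes>\<^bsub>G\<^esub> z \<in> B}) :: 'f)"
    by (rule gr_mult_bar_bar[OF Af(2,1) zy(1)])
  ultimately have "(gr_mult G (bar A) (bar B) z :: 'f) \<noteq> 0" by simp
  moreover have "gr_mult G (bar A) (bar B) y = (of_nat (card {g\<in>A. inv\<^bsub>G\<^esub> g \<otimes>\<^bsub>G\<^esub> y \<in> B}) :: 'f)"
    by (rule gr_mult_bar_bar[OF Af(2,1) zy(2)])
  ultimately have "(of_nat (card {g\<in>A. inv\<^bsub>G\<^esub> g \<otimes>\<^bsub>G\<^esub> y \<in> B}) :: 'f) \<noteq> 0"
    using eq by simp
  then have "card {g\<in>A. inv\<^bsub>G\<^esub> g \<otimes>\<^bsub>G\<^esub> y \<in> B} \<noteq> 0" by (intro notI) simp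
  then have "{g\<in>A. inv\<^bsub>G\<^esub> g \<otimes>\<^bsub>G\<^esub> y \<in> B} \<noteq> {}" by (intro notI) simp
  then show ?thesis by blast
qed

context group begin

lemma pw_cc:
  assumes tf: "torsion_free G" and sp: "schur_partition G D TYPE('f::field_char_0)"
    and CD: "C \<in> D" and c: "c \<in> carrier G" "c \<noteq> \<one>"
    and C: "C \<subseteq> range (\<lambda>k::int. c [^] k)"
  shows "classconst D (pw G C n :: 'a \<Rightarrow> 'f)"
proof (induction n)
  case 0
  then show ?case using cc_bar[OF sp sp_D(4)[OF sp]] by simp
next
  case (Suc n)
  have finC: "finite C" using sp_D(1)[OF sp CD] by auto
  note F = pw_formula[OF tf c C finC, where 'f='f]
  let ?K = "{k::int. c [^] k \<in> C}"
  have injc: "inj (\<lambda>k::int. c [^] k)" by (rule pow_inj_on[OF tf c])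
  have finK: "finite ?K"
    using finite_vimageI[OF finC injc] by (simp add: vimage_def)
  have z: "(pw G C n x :: 'f) = 0" if "x \<notin> carrier G" for x
  proof -
    have "x \<notin> range (\<lambda>k::int. c [^] k)" using that c by auto
    then show ?thesis using F by blast
  qed
  have "{x. (pw G C n x :: 'f) \<noteq> 0} \<subseteq> (\<lambda>k::int. c [^] k) ` {s. cnt n ?K s \<noteq> 0}"
  proof
    fix x assume x: "x \<in> {x. (pw G C n x :: 'f) \<noteq> 0}"
    then have "x \<in> range (\<lambda>k::int. c [^] k)" using F by blast
    then obtain s :: int where s: "x = c [^] s" by auto
    then have "cnt n ?K s \<noteq> 0" using x F by auto
    then show "x \<in> (\<lambda>k::int. c [^] k) ` {s. cnt n ?K s \<noteq> 0}" using s by auto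
  qed
  then have fin: "finite {x. (pw G C n x :: 'f) \<noteq> 0}"
    using finite_surj[OF cnt_supp_finite[OF finK]] by blast
  show ?case using cc_mult[OF sp CD Suc.IH z fin] by simp
qed

lemma class_count:
  assumes tf: "torsion_free G" and sp: "schur_partition G D TYPE('f::field_char_0)"
    and CD: "C \<in> D" and c: "c \<in> carrier G" "c \<noteq> \<one>"
    and C: "C \<subseteq> range (\<lambda>k::int. c [^] k)"
    and E: "E \<in> D" "c [^] (s0::int) \<in> E" "y \<in> E"
    and nz: "cnt n {k::int. c [^] k \<in> C} s0 \<noteq> 0"
  shows "\<exists>t::int. y = c [^] t \<and> cnt n {k::int. c [^] k \<in> C} t = cnt n {k::int. c [^] k \<in> C} s0"
proof -
  have finC: "finite C" using sp_D(1)[OF sp CD] by auto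
  note F = pw_formula[OF tf c C finC, where 'f='f and n=n]
  have "\<forall>E0\<in>D. \<forall>x\<in>E0. \<forall>y\<in>E0. (pw G C n x :: 'f) = pw G C n y"
    using pw_cc[OF tf sp CD c C, of n] unfolding classconst_def by blast
  then have eq: "(pw G C n y :: 'f) = pw G C n (c [^] s0)" using E by blast
  also have "\<dots> = of_nat (cnt n {k::int. c [^] k \<in> C} s0)" using F by blast
  finally have eq2: "(pw G C n y :: 'f) = of_nat (cnt n {k::int. c [^] k \<in> C} s0)" .
  then have "(pw G C n y :: 'f) \<noteq> 0" using nz by simp
  then have "y \<in> range (\<lambda>k::int. c [^] k)" using F by blast
  then obtain t :: int where t: "y = c [^] t" by auto
  then have "(of_nat (cnt n {k::int. c [^] k \<in> C} t) :: 'f) = of_nat (cnt n {k::int. c [^] k \<in> C} s0)"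
    using eq2 F by simp
  then show ?thesis using t by (intro exI[of _ t]) simp
qed


lemma cm: "c \<in> carrier G \<Longrightarrow> c [^] (a::int) \<otimes> c [^] (b::int) = c [^] (a + b)"
  by (simp add: int_pow_mult)

lemma ci: "c \<in> carrier G \<Longrightarrow> inv (c [^] (a::int)) = c [^] (- a)"
  by (simp add: int_pow_neg)

lemma peq: "torsion_free G \<Longrightarrow> c \<in> carrier G \<Longrightarrow> c \<noteq> \<one> \<Longrightarrow> (c [^] (a::int) = c [^] (b::int)) = (a = b)"
  using pow_inj by blast

lemma single_mult:
  assumes sp: "schur_partition G D TYPE('f::field_char_0)"
    and s: "{s} \<in> D" and t: "{t} \<in> D"
  shows "{s \<otimes> t} \<in> D"
proof -
  have sc: "s \<in> carrier G" "t \<in> carrier G" using sp_D(1)[OF sp s] sp_D(1)[OF sp t] by auto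
  then have "s \<otimes> t \<in> carrier G" by simp
  then obtain E0 where E0: "E0 \<in> D" "s \<otimes> t \<in> E0" using sp_D(3)[OF sp] by blast
  have "y = s \<otimes> t" if y: "y \<in> E0" for y
  proof -
    have "inv s \<otimes> (s \<otimes> t) \<in> {t}" using sc by (simp add: m_assoc[symmetric])
    then have "\<exists>a\<in>{s}. inv a \<otimes> y \<in> {t}"
      using prod_support[OF sp s t E0(1) E0(2) y, of s] by simp
    then have "t = inv s \<otimes> y" by simp
    moreover have "y \<in> carrier G" using sp_D(1)[OF sp E0(1)] y by auto
    ultimately show ?thesis using sc inv_solve_left[of t s y] by blast
  qed
  then have "E0 = {s \<otimes> t}" using E0 by blast
  then show ?thesis using E0 by simp
qed

lemma single_inv:
  assumes sp: "schur_partition G D TYPE('f::field_char_0)" and s: "{s} \<in> D"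
  shows "{inv s} \<in> D"
  using sp_D(5)[OF sp s] by simp

lemma single_pow_nat:
  assumes sp: "schur_partition G D TYPE('f::field_char_0)" and s: "{s} \<in> D"
  shows "{s [^] (n::nat)} \<in> D"
proof (induction n)
  case 0
  then show ?case using sp_D(4)[OF sp] by simp
next
  case (Suc n)
  then show ?case using single_mult[OF sp Suc s] by simp
qed

lemma single_pow:
  assumes sp: "schur_partition G D TYPE('f::field_char_0)" and s: "{s} \<in> D"
  shows "{s [^] (k::int)} \<in> D"
proof (cases "k < 0")
  case True
  have e: "s [^] k = inv (s [^] nat (- k))" by (simp only: int_pow_def2 True if_True)
  show ?thesis unfolding e by (rule single_inv[OF sp single_pow_nat[OF sp s]])
next
  case False
  have e: "s [^] k = s [^] nat k" by (simp only: int_pow_def2 False if_False)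
  show ?thesis unfolding e by (rule single_pow_nat[OF sp s])
qed

lemma pair_pow:
  assumes tf: "torsion_free G" and sp: "schur_partition G D TYPE('f::field_char_0)"
    and c: "c \<in> carrier G" "c \<noteq> \<one>"
    and CD: "{c [^] (\<alpha>::int), c [^] (\<beta>::int)} \<in> D" and ab: "\<alpha> \<noteq> \<beta>" and n: "n \<ge> 1"
  shows "{c [^] (int n * \<alpha>)} \<notin> D"
proof
  assume S1: "{c [^] (int n * \<alpha>)} \<in> D"
  let ?C = "{c [^] \<alpha>, c [^] \<beta>}"
  have K: "{k::int. c [^] k \<in> ?C} = {\<alpha>, \<beta>}" using peq[OF tf c] by auto
  have Crange: "?C \<subseteq> range (\<lambda>k::int. c [^] k)" by auto
  have "c [^] (int (n + 1) * \<alpha>) \<in> carrier G" using c by simp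
  then obtain E' where E': "E' \<in> D" "c [^] (int (n + 1) * \<alpha>) \<in> E'" using sp_D(3)[OF sp] by blast
  have top: "cnt (n + 1) {\<alpha>, \<beta>} (int (n + 1) * \<alpha>) = 1"
  proof (cases "\<beta> \<le> \<alpha>")
    case True
    then show ?thesis by (intro cnt_top) auto
  next
    case False
    then show ?thesis by (intro cnt_bot) auto
  qed
  have hE: "\<exists>k\<in>{\<alpha>, \<beta>}. y = c [^] (int (n + 1) * k)" if y: "y \<in> E'" for y
  proof -
    obtain t :: int where t: "y = c [^] t" "cnt (n + 1) {\<alpha>, \<beta>} t = 1"
      using class_count[OF tf sp CD c Crange E' y, of "n + 1"] top unfolding K by auto
    then obtain k where "k \<in> {\<alpha>, \<beta>}" "t = int (n + 1) * k"
      using cnt_one_const[of "{\<alpha>, \<beta>}" "n + 1" t] by auto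
    then show ?thesis using t by blast
  qed
  have invS1: "{c [^] (- (int n * \<alpha>))} \<in> D" using single_inv[OF sp S1] ci[OF c(1)] by simp
  have "inv (c [^] (int (n + 1) * \<alpha>)) \<otimes> c [^] \<alpha> = c [^] (- (int n * \<alpha>))"
    using c by (simp add: ci cm algebra_simps)
  then have i1: "inv (c [^] (int (n + 1) * \<alpha>)) \<otimes> c [^] \<alpha> \<in> {c [^] (- (int n * \<alpha>))}" by simp
  have i2: "c [^] \<alpha> \<in> ?C" "c [^] \<beta> \<in> ?C" by auto
  have "\<exists>a\<in>E'. inv a \<otimes> c [^] \<beta> \<in> {c [^] (- (int n * \<alpha>))}"
    by (rule prod_support[OF sp E'(1) invS1 CD i2(1) i2(2) E'(2) i1])
  then obtain a where a: "a \<in> E'" "inv a \<otimes> c [^] \<beta> = c [^] (- (int n * \<alpha>))" by blast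
  obtain k where k: "k \<in> {\<alpha>, \<beta>}" "a = c [^] (int (n + 1) * k)" using hE[OF a(1)] by blast
  have "- (int (n + 1) * k) + \<beta> = - (int n * \<alpha>)"
    using a(2) k(2) c by (simp add: ci cm peq[OF tf c])
  then show False using k(1) ab n by (auto simp: algebra_simps)
qed


lemma class_shape:
  assumes tf: "torsion_free G" and lc: "locally_cyclic G"
    and sp: "schur_partition G D TYPE('f::field_char_0)" and CD: "C \<in> D"
  shows "(\<exists>g. C = {g}) \<or> (\<exists>g\<in>carrier G. g \<noteq> inv g \<and> C = {g, inv g})"
proof -
  have Cp: "C \<noteq> {}" "finite C" "C \<subseteq> carrier G" using sp_D(1)[OF sp CD] by auto
  obtain c where c: "c \<in> carrier G" "C \<subseteq> range (\<lambda>n::int. c [^] n)"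
    using getcyc[OF lc Cp(2,3)] by blast
  show ?thesis
  proof (cases "c = \<one>")
    case True
    then have "C \<subseteq> {\<one>}" using c(2) by auto
    then have "C = {\<one>}" using Cp(1) by auto
    then show ?thesis by blast
  next
    case False
    note cc = c(1) False
    define K where "K = {k::int. c [^] k \<in> C}"
    have injc: "inj (\<lambda>k::int. c [^] k)" by (rule pow_inj_on[OF tf cc])
    have finK: "finite K"
      using finite_vimageI[OF Cp(2) injc] by (simp add: vimage_def K_def)
    have CK: "C = (\<lambda>k. c [^] k) ` K" using c(2) unfolding K_def by auto
    have Kne: "K \<noteq> {}" using CK Cp(1) by auto
    define M where "M = Max K"
    define m where "m = Min K"
    have MK: "M \<in> K" "\<forall>x\<in>K. x \<le> M" using finK Kne unfolding M_def by auto
    have mK: "m \<in> K" "\<forall>x\<in>K. m \<le> x" using finK Kne unfolding m_def by auto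
    show ?thesis
    proof (cases "m = M")
      case True
      then have "K = {M}" using MK mK by force
      then have "C = {c [^] M}" using CK by simp
      then show ?thesis by blast
    next
      case False
      then have mM: "m < M" using MK mK by force
      define N where "N = nat (M - m)"
      have N: "int N = M - m" "N \<ge> 1" using mM unfolding N_def by auto
      have hclass: "\<exists>k\<in>{m, M}. y = c [^] (int j * k)"
        if j: "j \<ge> N" and E: "E \<in> D" "c [^] (int j * M) \<in> E" "y \<in> E" for j E y
      proof -
        have top: "cnt j K (int j * M) = 1" using cnt_top[OF MK] .
        obtain t :: int where t: "y = c [^] t" "cnt j K t = 1"
          using class_count[OF tf sp CD cc c(2) E, of j] top unfolding K_def by auto
        have "j \<ge> 1" using j N by auto
        then obtain k where k: "k \<in> K" "t = int j * k" using cnt_one_const[OF finK t(2)] by auto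
        have "k = m \<or> k = M"
        proof (rule ccontr)
          assume "\<not> (k = m \<or> k = M)"
          then have "m < k" "k < M" using k(1) MK mK by force+
          then have "cnt j K (int j * k) \<noteq> 1"
            using cnt_interior[OF finK k(1) mK(1) MK(1)] j N by auto
          then show False using t k by simp
        qed
        then show ?thesis using t k by auto
      qed
      obtain E1 where E1: "E1 \<in> D" "c [^] (int N * M) \<in> E1" using sp_D(3)[OF sp] cc by blast
      obtain E2 where E2: "E2 \<in> D" "c [^] (int (N + 1) * M) \<in> E2" using sp_D(3)[OF sp] cc by blast
      have iE1: "(\<lambda>g. inv g) ` E1 \<in> D" using sp_D(5)[OF sp E1(1)] .
      have i1: "inv (c [^] (int (N + 1) * M)) \<otimes> c [^] M \<in> (\<lambda>g. inv g) ` E1"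
      proof -
        have "inv (c [^] (int (N + 1) * M)) \<otimes> c [^] M = inv (c [^] (int N * M))"
          using cc by (simp add: ci cm algebra_simps)
        then show ?thesis using E1(2) by auto
      qed
      have cM: "c [^] M \<in> C" using MK unfolding K_def by auto
      have KmM: "k = m \<or> k = M" if kK: "k \<in> K" for k
      proof -
        have ck: "c [^] k \<in> C" using kK unfolding K_def by auto
        obtain a where a: "a \<in> E2" "inv a \<otimes> c [^] k \<in> (\<lambda>g. inv g) ` E1"
          using prod_support[OF sp E2(1) iE1 CD cM ck E2(2) i1] by blast
        then obtain e where e: "e \<in> E1" "inv a \<otimes> c [^] k = inv e" by blast
        obtain k1 where k1: "k1 \<in> {m, M}" "a = c [^] (int (N + 1) * k1)"
          using hclass[OF _ E2 a(1)] by auto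
        obtain k2 where k2: "k2 \<in> {m, M}" "e = c [^] (int N * k2)"
          using hclass[OF _ E1 e(1)] by auto
        have eq: "- (int (N + 1) * k1) + k = - (int N * k2)"
          using e(2) k1(2) k2(2) cc by (simp add: ci cm peq[OF tf cc])
        have pos: "int N * (M - m) > 0" using N mM by simp
        have bounds: "m \<le> k" "k \<le> M" using kK MK mK by auto
        show ?thesis
        proof (cases "k1 = k2")
          case True
          then have "k = k1" using eq by (simp add: algebra_simps)
          then show ?thesis using k1(1) by auto
        next
          case False
          then have "(k1 = M \<and> k2 = m) \<or> (k1 = m \<and> k2 = M)" using k1(1) k2(1) by auto
          then show ?thesis
          proof
            assume "k1 = M \<and> k2 = m"
            then have "k = M + int N * (M - m)" using eq by (simp add: algebra_simps)
            then show ?thesis using pos bounds by linarith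
          next
            assume "k1 = m \<and> k2 = M"
            then have "k = m - int N * (M - m)" using eq by (simp add: algebra_simps)
            then show ?thesis using pos bounds by linarith
          qed
        qed
      qed
      then have Keq: "K = {m, M}" using MK mK by auto
      have Ceq: "C = {c [^] m, c [^] M}" using CK Keq by simp
      have mne: "m \<noteq> M" using mM by simp
      have cmM: "c [^] (m + M) \<in> carrier G" using cc by simp
      obtain E3 where E3: "E3 \<in> D" "c [^] (m + M) \<in> E3" using sp_D(3)[OF sp cmM] by blast
      have "y = c [^] (m + M)" if y: "y \<in> E3" for y
      proof -
        have nz: "cnt 2 K (m + M) \<noteq> 0" using cnt2_mid[OF mne] Keq by simp
        obtain t :: int where t: "y = c [^] t" "cnt 2 K t = cnt 2 K (m + M)"
          using class_count[OF tf sp CD cc c(2) E3 y, of 2] nz unfolding K_def by auto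
        then have "cnt 2 {m, M} t = 2" using cnt2_mid[OF mne] Keq by simp
        then have "t = m + M" by (rule cnt2_only[OF mne])
        then show ?thesis using t by simp
      qed
      then have "E3 = {c [^] (m + M)}" using E3(2) by blast
      then have E3s: "{c [^] (m + M)} \<in> D" using E3(1) by simp
      show ?thesis
      proof (cases "m + M = 0")
        case True
        then have "m = - M" by simp
        then have cm_eq: "c [^] m = inv (c [^] M)" using cc by (simp add: ci)
        have "c [^] M \<noteq> c [^] m" using peq[OF tf cc, of M m] mne by simp
        then have ne: "c [^] M \<noteq> inv (c [^] M)" using cm_eq by metis
        have "C = {c [^] M, inv (c [^] M)}" using Ceq cm_eq by auto
        moreover have "c [^] M \<in> carrier G" using cc by simp
        ultimately show ?thesis using ne by blast
      next
        case False
        define \<sigma> where "\<sigma> = m + M"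
        have s0: "\<sigma> \<noteq> 0" using False unfolding \<sigma>_def by simp
        have "{(c [^] \<sigma>) [^] (sgn \<sigma> * M)} \<in> D" using single_pow[OF sp E3s[folded \<sigma>_def]] .
        moreover have "(c [^] \<sigma>) [^] (sgn \<sigma> * M) = c [^] (int (nat \<bar>\<sigma>\<bar>) * M)"
        proof -
          have h: "\<sigma> * (sgn \<sigma> * M) = int (nat \<bar>\<sigma>\<bar>) * M"
            by (cases "\<sigma> > 0") (auto simp: sgn_if)
          show ?thesis unfolding int_pow_pow[OF cc(1), of \<sigma> "sgn \<sigma> * M"] h by (rule refl)
        qed
        ultimately have "{c [^] (int (nat \<bar>\<sigma>\<bar>) * M)} \<in> D" by simp
        moreover have "{c [^] M, c [^] m} \<in> D" using CD Ceq by (simp add: insert_commute)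
        moreover have "nat \<bar>\<sigma>\<bar> \<ge> 1" using s0 by simp
        ultimately have False using pair_pow[OF tf sp cc _ mne[symmetric], of "nat \<bar>\<sigma>\<bar>"] by blast
        then show ?thesis ..
      qed
    qed
  qed
qed


lemma no_mix:
  assumes tf: "torsion_free G" and lc: "locally_cyclic G"
    and sp: "schur_partition G D TYPE('f::field_char_0)"
    and g: "{g} \<in> D" "g \<noteq> \<one>" and h: "{h, inv h} \<in> D" "h \<in> carrier G" "h \<noteq> inv h"
  shows False
proof -
  have gc: "g \<in> carrier G" using sp_D(1)[OF sp g(1)] by auto
  obtain c where c: "c \<in> carrier G" "{g, h} \<subseteq> range (\<lambda>n::int. c [^] n)"
    using getcyc[OF lc, of "{g, h}"] gc h(2) by auto
  obtain \<gamma> :: int where ga: "g = c [^] \<gamma>" using c(2) by auto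
  obtain \<eta> :: int where et: "h = c [^] \<eta>" using c(2) by auto
  have c1: "c \<noteq> \<one>" using ga g(2) by auto
  note cc = c(1) c1
  have g0: "\<gamma> \<noteq> 0" using ga g(2) by auto
  have ih: "inv h = c [^] (- \<eta>)" using et cc by (simp add: ci)
  have ne: "\<eta> \<noteq> - \<eta>" using h(3) et ih by auto
  have CD: "{c [^] \<eta>, c [^] (- \<eta>)} \<in> D" using h(1) et ih by simp
  have n1: "nat \<bar>\<gamma>\<bar> \<ge> 1" using g0 by simp
  have notin: "{c [^] (int (nat \<bar>\<gamma>\<bar>) * \<eta>)} \<notin> D" by (rule pair_pow[OF tf sp cc CD ne n1])
  have "{g [^] (sgn \<gamma> * \<eta>)} \<in> D" by (rule single_pow[OF sp g(1)])
  moreover have "g [^] (sgn \<gamma> * \<eta>) = c [^] (int (nat \<bar>\<gamma>\<bar>) * \<eta>)"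
  proof -
    have hh: "\<gamma> * (sgn \<gamma> * \<eta>) = int (nat \<bar>\<gamma>\<bar>) * \<eta>"
      by (cases "\<gamma> > 0") (auto simp: sgn_if)
    show ?thesis unfolding ga int_pow_pow[OF cc(1), of \<gamma> "sgn \<gamma> * \<eta>"] hh by (rule refl)
  qed
  ultimately show False using notin by simp
qed

end

theorem theorem4p1:
  fixes G :: "('g, 'b) monoid_scheme"
    and S :: "('g \<Rightarrow> 'f::field_char_0) set"
  assumes "group G"
    and "torsion_free G"
    and "locally_cyclic G"
    and "schur_ring G S"
  shows "S = group_ring G \<or> S = sym_schur_ring G"
proof -
  interpret group G by fact
  note tf = assms(2) and lc = assms(3)
  obtain D where sp: "schur_partition G D TYPE('f)" and S: "S = span_classes D"
    using assms(4) unfolding schur_ring_def by blast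
  show ?thesis
  proof (cases "\<exists>g. {g} \<in> D \<and> g \<noteq> \<one>\<^bsub>G\<^esub>")
    case True
    then obtain g where g: "{g} \<in> D" "g \<noteq> \<one>\<^bsub>G\<^esub>" by blast
    have "D = {{g} | g. g \<in> carrier G}"
    proof (rule Set.set_eqI, rule iffI)
      fix E assume E: "E \<in> D"
      show "E \<in> {{g} | g. g \<in> carrier G}"
        using class_shape[OF tf lc sp E]
      proof
        assume "\<exists>x. E = {x}"
        then obtain x where x: "E = {x}" by blast
        then have "x \<in> carrier G" using sp_D(1)[OF sp E] by auto
        then show ?thesis using x by blast
      next
        assume "\<exists>h\<in>carrier G. h \<noteq> inv\<^bsub>G\<^esub> h \<and> E = {h, inv\<^bsub>G\<^esub> h}"
        then obtain h where h: "h \<in> carrier G" "h \<noteq> inv\<^bsub>G\<^esub> h" "E = {h, inv\<^bsub>G\<^esub> h}" by blast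
        then have False using no_mix[OF tf lc sp g, of h] E by blast
        then show ?thesis ..
      qed
    next
      fix E assume "E \<in> {{g} | g. g \<in> carrier G}"
      then obtain x where x: "E = {x}" "x \<in> carrier G" by blast
      obtain E0 where E0: "E0 \<in> D" "x \<in> E0" using sp_D(3)[OF sp x(2)] by blast
      show "E \<in> D"
        using class_shape[OF tf lc sp E0(1)]
      proof
        assume "\<exists>y. E0 = {y}"
        then have "E0 = {x}" using E0(2) by blast
        then show ?thesis using E0(1) x(1) by simp
      next
        assume "\<exists>h\<in>carrier G. h \<noteq> inv\<^bsub>G\<^esub> h \<and> E0 = {h, inv\<^bsub>G\<^esub> h}"
        then obtain h where h: "h \<in> carrier G" "h \<noteq> inv\<^bsub>G\<^esub> h" "E0 = {h, inv\<^bsub>G\<^esub> h}" by blast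
        then have False using no_mix[OF tf lc sp g, of h] E0(1) by blast
        then show ?thesis ..
      qed
    qed
    then show ?thesis by (simp add: S group_ring_def)
  next
    case False
    have "D = {{g, inv\<^bsub>G\<^esub> g} | g. g \<in> carrier G}"
    proof (rule Set.set_eqI, rule iffI)
      fix E assume E: "E \<in> D"
      show "E \<in> {{g, inv\<^bsub>G\<^esub> g} | g. g \<in> carrier G}"
        using class_shape[OF tf lc sp E]
      proof
        assume "\<exists>x. E = {x}"
        then obtain x where x: "E = {x}" by blast
        then have "x = \<one>\<^bsub>G\<^esub>" using False E by blast
        then have "E = {\<one>\<^bsub>G\<^esub>, inv\<^bsub>G\<^esub> \<one>\<^bsub>G\<^esub>}" using x by simp
        then show ?thesis by blast
      next
        assume "\<exists>h\<in>carrier G. h \<noteq> inv\<^bsub>G\<^esub> h \<and> E = {h, inv\<^bsub>G\<^esub> h}"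
        then show ?thesis by blast
      qed
    next
      fix E assume "E \<in> {{g, inv\<^bsub>G\<^esub> g} | g. g \<in> carrier G}"
      then obtain x where x: "E = {x, inv\<^bsub>G\<^esub> x}" "x \<in> carrier G" by blast
      obtain E0 where E0: "E0 \<in> D" "x \<in> E0" using sp_D(3)[OF sp x(2)] by blast
      show "E \<in> D"
        using class_shape[OF tf lc sp E0(1)]
      proof
        assume "\<exists>y. E0 = {y}"
        then have e0: "E0 = {x}" using E0(2) by blast
        then have "x = \<one>\<^bsub>G\<^esub>" using False E0(1) by blast
        then have "E = E0" using e0 x(1) by simp
        then show ?thesis using E0(1) by simp
      next
        assume "\<exists>h\<in>carrier G. h \<noteq> inv\<^bsub>G\<^esub> h \<and> E0 = {h, inv\<^bsub>G\<^esub> h}"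
        then obtain h where h: "h \<in> carrier G" "h \<noteq> inv\<^bsub>G\<^esub> h" "E0 = {h, inv\<^bsub>G\<^esub> h}" by blast
        then have "x = h \<or> x = inv\<^bsub>G\<^esub> h" using E0(2) by blast
        then have "E = E0"
        proof
          assume "x = h" then show ?thesis using h x by simp
        next
          assume "x = inv\<^bsub>G\<^esub> h"
          then have "inv\<^bsub>G\<^esub> x = h" using h(1) by simp
          then show ?thesis using h x \<open>x = inv\<^bsub>G\<^esub> h\<close> by auto
        qed
        then show ?thesis using E0(1) by simp
      qed
    qed
    then show ?thesis by (simp add: S sym_schur_ring_def)
  qed
qed

end
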